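(* Let $D$ be a positive integer that is not a perfect square, and let $L_j$ ($j\in\mathbb{Z}$) be the simple equivalence matrices of the principal cycle of determinant $D$. Then: (i) For $j>0$ the entries of $L_j$ have the (weak) sign patterns $\begin{pmatrix}+&+\\+&+\end{pmatrix}$, $\begin{pmatrix}-&+\\-&+\end{pmatrix}$, $\begin{pmatrix}-&-\\-&-\end{pmatrix}$, $\begin{pmatrix}+&-\\+&-\end{pmatrix}$ according as $j\equiv0,1,2,3\pmod 4$, where $+$ means the entry is $\ge0$ and $-$ means it is $\le0$. (ii) For $j>0$, $|L_j|=|S^{(1)}|\cdots|S^{(j)}|$ and $|L_{-j}|=|S^{(-j)}|\cdots|S^{(-1)}|$. (iii) For every integer $j$ with $|j|\ge2$, writing $L_j=(l_{ik})$, we have $1\le \dfrac{\max_{i,k}|l_{ik}|}{\min_{i,k}|l_{ik}|}\le 4(D+\sqrt D)$.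
   Context: Forms: $Q=[a,2b,c]$ means $ax_1^2+2bx_1x_2+cx_2^2$ ($a,b,c\in\mathbb{Z}$), with matrix $\begin{pmatrix} a&b\\ b&c\end{pmatrix}$ and determinant $b^2-ac$. A form of determinant $D$ is reduced if $0<b<\sqrt D$ and $\sqrt D-b<|a|<\sqrt D+b$. The reduced identity form is $\tilde I=[1,2\lambda,\lambda^2-D]$, $\lambda=\lfloor\sqrt D\rfloor$. For a reduced form $Q_1=[a_1,2b_1,c_1]$, let $S=\begin{pmatrix}0&1\\-1&\mu\end{pmatrix}$ where $\mu$ is the integer with $-\sqrt D-b_1<\mu c_1<-\sqrt D-b_1+|c_1|$; the right neighbor of $Q_1$ is the reduced form $S^tQ_1S$. Put $Q^{(0)}=\tilde I$, let $Q^{(j)}$ be the right neighbor of $Q^{(j-1)}$ and $S^{(j)}$ the matrix $S$ taking $Q^{(j-1)}$ to $Q^{(j)}$ ($j\ge1$). The sequence $Q^{(j)}$ is periodic with least period $2p$. For $j\ge1$, $L_j=S^{(1)}\cdots S^{(j)}$, and $L_0$ is the identity. For negative $j$, $S^{(j)}=(S^{(j_0)})^{-1}$ where $j\equiv j_0\pmod{2p}$, $0<j_0\le 2p$, and for $j>0$, $L_{-j}=S^{(-j)}\cdots S^{(-1)}$. For a matrix $M=(m_{ik})$, $|M|=(|m_{ik}|)$ denotes the entrywise absolute value. *)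

theory Defs
  imports "HOL-Analysis.Analysis"
begin

(* 2x2 integer matrices are int^2^2; entries M $ i $ k with i,k in {1,2}. *)
definition mat2 :: "int \<Rightarrow> int \<Rightarrow> int \<Rightarrow> int \<Rightarrow> int^2^2" where
  "mat2 a b c d = (\<chi> i k. if i = 1 then (if k = 1 then a else b) else (if k = 1 then c else d))"

(* A binary quadratic form [a,2b,c] is represented by its symmetric matrix mat2 a b b c.
   Its determinant (paper convention) is b^2 - ac. *)
definition form_det :: "int^2^2 \<Rightarrow> int" where
  "form_det Q = (Q $ 1 $ 2)^2 - Q $ 1 $ 1 * Q $ 2 $ 2"

definition ident_form :: "int \<Rightarrow> int^2^2" where
  "ident_form D = (let l = \<lfloor>sqrt (real_of_int D)\<rfloor> in mat2 1 l l (l^2 - D))"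

definition nbr_mu :: "int \<Rightarrow> int^2^2 \<Rightarrow> int" where
  "nbr_mu D Q = (THE \<mu>::int.
      - sqrt (real_of_int D) - Q $ 1 $ 2 < real_of_int (\<mu> * Q $ 2 $ 2) \<and>
      real_of_int (\<mu> * Q $ 2 $ 2) < - sqrt (real_of_int D) - Q $ 1 $ 2 + \<bar>Q $ 2 $ 2\<bar>)"

definition nbr_S :: "int \<Rightarrow> int^2^2 \<Rightarrow> int^2^2" where
  "nbr_S D Q = mat2 0 1 (-1) (nbr_mu D Q)"

definition right_nbr :: "int \<Rightarrow> int^2^2 \<Rightarrow> int^2^2" where
  "right_nbr D Q = transpose (nbr_S D Q) ** Q ** nbr_S D Q"

definition Qseq :: "int \<Rightarrow> nat \<Rightarrow> int^2^2" where
  "Qseq D j = (right_nbr D ^^ j) (ident_form D)"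

(* least period (= 2p) of the sequence Q^(j) *)
definition cyc_len :: "int \<Rightarrow> nat" where
  "cyc_len D = (LEAST n. 0 < n \<and> (\<forall>j. Qseq D (j + n) = Qseq D j))"

definition inv2 :: "int^2^2 \<Rightarrow> int^2^2" where
  "inv2 M = (THE N. M ** N = mat 1 \<and> N ** M = mat 1)"

definition Spos :: "int \<Rightarrow> nat \<Rightarrow> int^2^2" where
  "Spos D j = nbr_S D (Qseq D (j - 1))"

(* S^(j), j in Z (j <> 0); for j < 0, S^(j) = (S^(j0))^-1 with j = j0 mod 2p, 0 < j0 <= 2p *)
definition Sseq :: "int \<Rightarrow> int \<Rightarrow> int^2^2" where
  "Sseq D j = (if 0 < j then Spos D (nat j)
     else if j < 0 then inv2 (Spos D (nat ((j - 1) mod int (cyc_len D) + 1)))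
     else mat 1)"

fun mprodn :: "(int \<Rightarrow> int^2^2) \<Rightarrow> int \<Rightarrow> nat \<Rightarrow> int^2^2" where
  "mprodn f a 0 = mat 1"
| "mprodn f a (Suc n) = mprodn f a n ** f (a + int n)"

definition Lmat :: "int \<Rightarrow> int \<Rightarrow> int^2^2" where
  "Lmat D j = (if 0 \<le> j then mprodn (Sseq D) 1 (nat j)
               else mprodn (Sseq D) j (nat (- j)))"

definition absM :: "int^2^2 \<Rightarrow> int^2^2" where
  "absM M = (\<chi> i k. \<bar>M $ i $ k\<bar>)"

definition max_entry :: "int^2^2 \<Rightarrow> int" where
  "max_entry M = Max {\<bar>M $ i $ k\<bar> | i k. True}"

definition min_entry :: "int^2^2 \<Rightarrow> int" where
  "min_entry M = Min {\<bar>M $ i $ k\<bar> | i k. True}"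

end

theory Submission
  imports Defs
begin

lemma mat2_nth[simp]:
  "mat2 a b c d $ 1 $ 1 = a" "mat2 a b c d $ 1 $ 2 = b"
  "mat2 a b c d $ 2 $ 1 = c" "mat2 a b c d $ 2 $ 2 = d"
  by (simp_all add: mat2_def)

lemma mat2_eta: "M = mat2 (M$1$1) (M$1$2) (M$2$1) (M$2$2)"
  unfolding mat2_def vec_eq_iff forall_2 by simp

lemma mat2_eq_iff: "mat2 a b c d = mat2 a' b' c' d' \<longleftrightarrow> a = a' \<and> b = b' \<and> c = c' \<and> d = d'"
  unfolding mat2_def vec_eq_iff forall_2 by simp

lemma mat2_mult: "mat2 a b c d ** mat2 e f g h = mat2 (a*e+b*g) (a*f+b*h) (c*e+d*g) (c*f+d*h)"
  unfolding matrix_matrix_mult_def mat2_def vec_eq_iff forall_2 by (simp add: sum_2)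

lemma mat2_transpose: "transpose (mat2 a b c d) = mat2 a c b d"
  unfolding transpose_def mat2_def vec_eq_iff forall_2 by simp

lemma mat2_one: "mat 1 = mat2 1 0 0 (1::int)"
  unfolding mat_def mat2_def vec_eq_iff forall_2 by simp

lemma absM_mat2: "absM (mat2 a b c d) = mat2 (\<bar>a\<bar>) (\<bar>b\<bar>) (\<bar>c\<bar>) (\<bar>d\<bar>)"
  unfolding absM_def mat2_def vec_eq_iff forall_2 by simp

lemma entries_set: "{f i k | i k. True} = {f (1::2) (1::2), f 1 2, f 2 1, f 2 2}"
  apply auto by (metis exhaust_2)


lemma sqrt_nonint:
  assumes "0 < D" "\<not> (\<exists>k::int. D = k^2)"
  shows "sqrt (real_of_int D) \<noteq> real_of_int n"
proof
  assume h: "sqrt (real_of_int D) = real_of_int n"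
  have "real_of_int D = (sqrt (real_of_int D))^2" using assms(1) by simp
  also have "\<dots> = real_of_int (n^2)" using h by simp
  finally have "D = n^2" by linarith
  then show False using assms(2) by blast
qed

definition red :: "int \<Rightarrow> int \<Rightarrow> int \<Rightarrow> int \<Rightarrow> bool" where
  "red D a b c \<longleftrightarrow> b^2 - a*c = D \<and> 0 < b \<and> real_of_int b < sqrt (real_of_int D) \<and>
     sqrt (real_of_int D) - b < real_of_int \<bar>a\<bar> \<and> real_of_int \<bar>a\<bar> < sqrt (real_of_int D) + b"

lemma red_facts:
  assumes "red D a b c"
  shows "a*c < 0" "c \<noteq> 0" "sqrt (real_of_int D) - b < real_of_int \<bar>c\<bar>" "real_of_int \<bar>c\<bar> < sqrt (real_of_int D) + b"
    "b \<le> \<lfloor>sqrt (real_of_int D)\<rfloor>" "0 < D"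
proof -
  let ?s = "sqrt (real_of_int D)"
  have D: "b^2 - a*c = D" and b0: "0 < b" and bs: "b < ?s" and a1: "?s - b < real_of_int \<bar>a\<bar>" and a2: "real_of_int \<bar>a\<bar> < ?s + b"
    using assms unfolding red_def by auto
  have s0: "0 < ?s" using b0 bs by linarith
  then show D0: "0 < D" by simp
  have b0r: "0 < real_of_int b" using b0 by simp
  have ss: "?s * ?s = D" using D0 by simp
  have "real_of_int b * b < ?s * ?s" by (rule mult_strict_mono[OF bs bs s0]) (use b0 in simp)
  then have "real_of_int (b*b) < real_of_int D" using ss by simp
  then have "b*b < D" by (simp only: of_int_less_iff)
  then have "b^2 < D" by (simp add: power2_eq_square)
  then show ac: "a*c < 0" using D by linarith
  then show "c \<noteq> 0" by auto
  have prod: "real_of_int \<bar>a\<bar> * real_of_int \<bar>c\<bar> = (?s - b) * (?s + b)"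
  proof -
    have "\<bar>a\<bar> * \<bar>c\<bar> = - (a*c)" using ac by (metis abs_mult abs_of_neg)
    then have "\<bar>a\<bar> * \<bar>c\<bar> = D - b^2" using D by linarith
    then have "real_of_int (\<bar>a\<bar> * \<bar>c\<bar>) = real_of_int (D - b^2)" by (simp only:)
    then have "\<bar>real_of_int a\<bar> * \<bar>real_of_int c\<bar> = ?s * ?s - real_of_int b * b" using ss by (simp add: power2_eq_square)
    then show ?thesis by (simp add: algebra_simps)
  qed
  show "?s - b < real_of_int \<bar>c\<bar>"
  proof (rule ccontr)
    assume "\<not> ?thesis"
    then have "real_of_int \<bar>c\<bar> \<le> ?s - b" by simp
    then have "real_of_int \<bar>a\<bar> * real_of_int \<bar>c\<bar> \<le> real_of_int \<bar>a\<bar> * (?s - b)" by (simp add: mult_left_mono)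
    also have "\<dots> < (?s + b) * (?s - b)" using a2 bs by (simp add: mult_strict_right_mono)
    finally show False using prod by (simp add: algebra_simps)
  qed
  show "real_of_int \<bar>c\<bar> < ?s + b"
  proof (rule ccontr)
    assume "\<not> ?thesis"
    then have cc: "?s + b \<le> real_of_int \<bar>c\<bar>" by simp
    have "(?s - b) * (?s + b) < real_of_int \<bar>a\<bar> * (?s + b)" by (rule mult_strict_right_mono[OF a1]) (use s0 b0r in linarith)
    also have "\<dots> \<le> real_of_int \<bar>a\<bar> * real_of_int \<bar>c\<bar>" using cc by (simp add: mult_left_mono)
    finally show False using prod by simp
  qed
  show "b \<le> \<lfloor>?s\<rfloor>" using bs by (simp add: le_floor_iff)
qed


lemma mu_unique:
  fixes x :: real and c :: int
  assumes "c \<noteq> 0" "\<And>k::int. x \<noteq> real_of_int (k*c)"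
  shows "\<exists>!\<mu>::int. x < real_of_int (\<mu>*c) \<and> real_of_int (\<mu>*c) < x + real_of_int \<bar>c\<bar>"
proof (rule ex_ex1I)
  define t where "t = x / real_of_int c"
  have cr: "real_of_int c \<noteq> 0" using assms(1) by simp
  have xt: "x = t * real_of_int c" using cr unfolding t_def by simp
  have ne: "t \<noteq> real_of_int \<lfloor>t\<rfloor>"
  proof
    assume "t = real_of_int \<lfloor>t\<rfloor>"
    then have "x = real_of_int (\<lfloor>t\<rfloor> * c)" using xt by simp
    then show False using assms(2) by blast
  qed
  have f1: "real_of_int \<lfloor>t\<rfloor> < t" using ne of_int_floor_le[of t] by linarith
  have f2: "t < real_of_int \<lfloor>t\<rfloor> + 1" by linarith
  show "\<exists>\<mu>::int. x < real_of_int (\<mu>*c) \<and> real_of_int (\<mu>*c) < x + real_of_int \<bar>c\<bar>"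
  proof (cases "c > 0")
    case True
    then have cp: "real_of_int c > 0" by simp
    have "t * c < (real_of_int \<lfloor>t\<rfloor> + 1) * c" using f2 cp by (simp add: mult_strict_right_mono)
    moreover have "real_of_int \<lfloor>t\<rfloor> * c < t * c" using f1 cp by (simp add: mult_strict_right_mono)
    ultimately have "x < real_of_int ((\<lfloor>t\<rfloor>+1)*c) \<and> real_of_int ((\<lfloor>t\<rfloor>+1)*c) < x + real_of_int \<bar>c\<bar>"
      using xt True by (simp add: algebra_simps)
    then show ?thesis by blast
  next
    case False
    then have cn: "real_of_int c < 0" using assms(1) by simp
    have "(real_of_int \<lfloor>t\<rfloor> + 1) * c < t * c" using f2 cn by (simp add: mult_strict_right_mono_neg)
    moreover have "t * c < real_of_int \<lfloor>t\<rfloor> * c" using f1 cn by (simp add: mult_strict_right_mono_neg)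
    ultimately have "x < real_of_int (\<lfloor>t\<rfloor>*c) \<and> real_of_int (\<lfloor>t\<rfloor>*c) < x + real_of_int \<bar>c\<bar>"
      using xt False assms(1) by (simp add: algebra_simps)
    then show ?thesis by blast
  qed
next
  fix m1 m2 :: int
  assume h1: "x < real_of_int (m1*c) \<and> real_of_int (m1*c) < x + real_of_int \<bar>c\<bar>"
     and h2: "x < real_of_int (m2*c) \<and> real_of_int (m2*c) < x + real_of_int \<bar>c\<bar>"
  have "\<bar>real_of_int (m1*c) - real_of_int (m2*c)\<bar> < real_of_int \<bar>c\<bar>" using h1 h2 by linarith
  then have "\<bar>(m1 - m2)*c\<bar> < \<bar>c\<bar>" by (simp add: algebra_simps flip: of_int_diff of_int_abs of_int_mult)
  then have "\<bar>m1 - m2\<bar> * \<bar>c\<bar> < 1 * \<bar>c\<bar>" by (simp add: abs_mult)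
  then have "\<bar>m1 - m2\<bar> < 1" by (rule mult_right_less_imp_less) simp
  then show "m1 = m2" by simp
qed


lemma red_step:
  assumes r: "red D a b c"
    and m1: "- sqrt (real_of_int D) - b < real_of_int (\<mu>*c)"
    and m2: "real_of_int (\<mu>*c) < - sqrt (real_of_int D) - b + real_of_int \<bar>c\<bar>"
  shows "\<mu>*c < 0" "\<bar>c\<bar> \<le> - (\<mu>*c)" "1 \<le> \<bar>\<mu>\<bar>" "\<bar>\<mu>\<bar> \<le> 2 * \<lfloor>sqrt (real_of_int D)\<rfloor>"
    "red D c (-b-\<mu>*c) (a + 2*b*\<mu> + \<mu>^2*c)"
proof -
  let ?s = "sqrt (real_of_int D)"
  note F = red_facts[OF r]
  have D: "b^2 - a*c = D" using r unfolding red_def by simp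
  show mc: "\<mu>*c < 0" using m2 F(4) by linarith
  then have "\<mu> \<noteq> 0" by auto
  then have "1 * \<bar>c\<bar> \<le> \<bar>\<mu>\<bar> * \<bar>c\<bar>" by (intro mult_right_mono) auto
  also have "\<dots> = - (\<mu>*c)" using mc by (simp add: abs_mult[symmetric])
  finally show cm: "\<bar>c\<bar> \<le> - (\<mu>*c)" by simp
  show "1 \<le> \<bar>\<mu>\<bar>" using \<open>\<mu> \<noteq> 0\<close> by simp
  have "\<bar>\<mu>\<bar> * 1 \<le> \<bar>\<mu>\<bar> * \<bar>c\<bar>" using F(2) by (intro mult_left_mono) auto
  also have "\<dots> = - (\<mu>*c)" using mc by (simp add: abs_mult[symmetric])
  finally have "\<bar>\<mu>\<bar> \<le> - (\<mu>*c)" by simp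
  then have "real_of_int \<bar>\<mu>\<bar> \<le> - real_of_int (\<mu>*c)" by (simp only: of_int_le_iff of_int_minus[symmetric])
  then have "real_of_int \<bar>\<mu>\<bar> < ?s + b" using m1 by linarith
  moreover have "real_of_int b \<le> real_of_int \<lfloor>?s\<rfloor>" using F(5) by simp
  moreover have "?s < real_of_int \<lfloor>?s\<rfloor> + 1" by linarith
  ultimately have "real_of_int \<bar>\<mu>\<bar> < 2 * real_of_int \<lfloor>?s\<rfloor> + 1" by linarith
  then have "real_of_int \<bar>\<mu>\<bar> < real_of_int (2 * \<lfloor>?s\<rfloor> + 1)" by simp
  then have "\<bar>\<mu>\<bar> < 2 * \<lfloor>?s\<rfloor> + 1" by (simp only: of_int_less_iff)
  then show "\<bar>\<mu>\<bar> \<le> 2 * \<lfloor>?s\<rfloor>" by linarith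
  let ?b = "-b-\<mu>*c"
  have b1: "real_of_int ?b > ?s - real_of_int \<bar>c\<bar>" using m2 by simp
  have b2: "real_of_int ?b < ?s" using m1 by simp
  have bs: "real_of_int b < ?s" using r unfolding red_def by simp
  have "real_of_int \<bar>c\<bar> \<le> - real_of_int (\<mu>*c)" using cm by (simp only: of_int_le_iff of_int_minus[symmetric])
  then have b3: "real_of_int ?b > real_of_int \<bar>c\<bar> - ?s" using bs by simp
  have "real_of_int ?b > 0" using b1 b3 by linarith
  then have bp: "?b > 0" by (simp only: of_int_0_less_iff)
  have Dn: "?b^2 - c*(a + 2*b*\<mu> + \<mu>^2*c) = D" using D by (simp add: algebra_simps power2_eq_square)
  show "red D c ?b (a + 2*b*\<mu> + \<mu>^2*c)"
    unfolding red_def using b1 b2 b3 Dn bp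
    by (auto simp: algebra_simps power2_eq_square)
qed


definition redM :: "int \<Rightarrow> int^2^2 \<Rightarrow> bool" where
  "redM D Q \<longleftrightarrow> Q$2$1 = Q$1$2 \<and> red D (Q$1$1) (Q$1$2) (Q$2$2)"

lemma mu_spec:
  assumes "0 < D" "\<not> (\<exists>k::int. D = k^2)" "redM D Q"
  shows "- sqrt (real_of_int D) - Q$1$2 < real_of_int (nbr_mu D Q * Q$2$2)"
        "real_of_int (nbr_mu D Q * Q$2$2) < - sqrt (real_of_int D) - Q$1$2 + real_of_int \<bar>Q$2$2\<bar>"
proof -
  let ?s = "sqrt (real_of_int D)"
  have c0: "Q$2$2 \<noteq> 0" using red_facts(2) assms(3) unfolding redM_def by blast
  have nk: "- ?s - Q$1$2 \<noteq> real_of_int (k * Q$2$2)" for k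
  proof
    assume "- ?s - Q$1$2 = real_of_int (k * Q$2$2)"
    then have "?s = real_of_int (- Q$1$2 - k * Q$2$2)" by simp
    then show False using sqrt_nonint[OF assms(1,2)] by blast
  qed
  have ex: "\<exists>!\<mu>::int. - ?s - Q$1$2 < real_of_int (\<mu>*Q$2$2) \<and> real_of_int (\<mu>*Q$2$2) < - ?s - Q$1$2 + real_of_int \<bar>Q$2$2\<bar>"
    by (rule mu_unique[OF c0 nk])
  have ex': "\<exists>!\<mu>::int.
      - sqrt (real_of_int D) - Q $ 1 $ 2 < real_of_int (\<mu> * Q $ 2 $ 2) \<and>
      real_of_int (\<mu> * Q $ 2 $ 2) < - sqrt (real_of_int D) - Q $ 1 $ 2 + \<bar>Q $ 2 $ 2\<bar>"
    using ex by simp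
  have "- sqrt (real_of_int D) - Q $ 1 $ 2 < real_of_int (nbr_mu D Q * Q $ 2 $ 2) \<and>
      real_of_int (nbr_mu D Q * Q $ 2 $ 2) < - sqrt (real_of_int D) - Q $ 1 $ 2 + \<bar>Q $ 2 $ 2\<bar>"
    unfolding nbr_mu_def by (rule theI'[OF ex'])
  then show "- sqrt (real_of_int D) - Q$1$2 < real_of_int (nbr_mu D Q * Q$2$2)"
        "real_of_int (nbr_mu D Q * Q$2$2) < - sqrt (real_of_int D) - Q$1$2 + real_of_int \<bar>Q$2$2\<bar>"
    by simp_all
qed

lemma right_nbr_mat2:
  "right_nbr D Q = (let a = Q$1$1; b = Q$1$2; b2 = Q$2$1; c = Q$2$2; \<mu> = nbr_mu D Q in
     mat2 c (-b2 - \<mu>*c) (-b - \<mu>*c) (a + b*\<mu> + \<mu>*b2 + \<mu>^2*c))"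
proof -
  define \<mu> where "\<mu> = nbr_mu D Q"
  have "right_nbr D Q = transpose (mat2 0 1 (-1) \<mu>) ** Q ** mat2 0 1 (-1) \<mu>"
    by (simp add: right_nbr_def nbr_S_def \<mu>_def)
  also have "\<dots> = transpose (mat2 0 1 (-1) \<mu>) ** mat2 (Q$1$1) (Q$1$2) (Q$2$1) (Q$2$2) ** mat2 0 1 (-1) \<mu>"
    using mat2_eta[of Q] by metis
  finally show ?thesis unfolding Let_def mat2_transpose mat2_mult \<mu>_def[symmetric]
    by (simp add: mat2_eq_iff algebra_simps power2_eq_square)
qed

lemma nbr_step:
  assumes "0 < D" "\<not> (\<exists>k::int. D = k^2)" "redM D Q"
  shows "redM D (right_nbr D Q)" "right_nbr D Q $1$1 = Q$2$2" "nbr_mu D Q * Q$2$2 < 0"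
    "1 \<le> \<bar>nbr_mu D Q\<bar>" "\<bar>nbr_mu D Q\<bar> \<le> 2 * \<lfloor>sqrt (real_of_int D)\<rfloor>"
proof -
  have r: "red D (Q$1$1) (Q$1$2) (Q$2$2)" and sy: "Q$2$1 = Q$1$2" using assms(3) unfolding redM_def by auto
  note st = red_step[OF r mu_spec[OF assms]]
  show "nbr_mu D Q * Q$2$2 < 0" "1 \<le> \<bar>nbr_mu D Q\<bar>" "\<bar>nbr_mu D Q\<bar> \<le> 2 * \<lfloor>sqrt (real_of_int D)\<rfloor>"
    using st by auto
  show "right_nbr D Q $1$1 = Q$2$2" unfolding right_nbr_mat2 Let_def by simp
  show "redM D (right_nbr D Q)" unfolding right_nbr_mat2 Let_def redM_def
    using st(5) sy by (simp add: algebra_simps)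
qed

lemma ident_red:
  assumes "0 < D" "\<not> (\<exists>k::int. D = k^2)"
  shows "redM D (ident_form D)"
proof -
  let ?s = "sqrt (real_of_int D)"
  let ?l = "\<lfloor>?s\<rfloor>"
  have s1: "1 \<le> ?s" using assms(1) by simp
  have l1: "1 \<le> ?l" using s1 by (simp add: le_floor_iff)
  have "real_of_int ?l \<le> ?s" by simp
  moreover have "real_of_int ?l \<noteq> ?s" using sqrt_nonint[OF assms] by metis
  ultimately have ls: "real_of_int ?l < ?s" by linarith
  have "?s < real_of_int ?l + 1" by linarith
  moreover have "1 \<le> real_of_int ?l" using l1 by simp
  ultimately have h: "1 < ?s + real_of_int ?l" "?s - real_of_int ?l < 1" using s1 by linarith+
  have "red D 1 ?l (?l^2 - D)" unfolding red_def
    apply (intro conjI)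
        apply simp
    using l1 apply simp
    using ls apply simp
    using h(2) apply simp
    apply (simp only: abs_one of_int_1 h(1))
    done
  then show ?thesis unfolding redM_def ident_form_def Let_def by simp
qed


lemma Qseq_Suc: "Qseq D (Suc j) = right_nbr D (Qseq D j)"
  unfolding Qseq_def by simp

lemma Qseq_0: "Qseq D 0 = ident_form D"
  unfolding Qseq_def by simp

lemma Qseq_red:
  assumes "0 < D" "\<not> (\<exists>k::int. D = k^2)"
  shows "redM D (Qseq D j)"
  by (induction j) (simp_all add: Qseq_0 Qseq_Suc ident_red[OF assms] nbr_step(1)[OF assms])

lemma Qseq_sign:
  assumes "0 < D" "\<not> (\<exists>k::int. D = k^2)"
  shows "if even j then Qseq D j $1$1 > 0 else Qseq D j $1$1 < 0"
proof (induction j)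
  case 0
  then show ?case by (simp add: Qseq_0 ident_form_def Let_def)
next
  case (Suc j)
  have r: "redM D (Qseq D j)" by (rule Qseq_red[OF assms])
  then have "Qseq D j $1$1 * Qseq D j $2$2 < 0" unfolding redM_def using red_facts(1) by blast
  moreover have "Qseq D (Suc j) $1$1 = Qseq D j $2$2" unfolding Qseq_Suc using nbr_step(2)[OF assms r] .
  ultimately show ?case using Suc.IH
    by (cases "even j") (auto simp: mult_less_0_iff)
qed

definition mu :: "int \<Rightarrow> nat \<Rightarrow> int" where
  "mu D k = nbr_mu D (Qseq D (k - 1))"

lemma mu_props:
  assumes "0 < D" "\<not> (\<exists>k::int. D = k^2)" "1 \<le> k"
  shows "odd k \<Longrightarrow> mu D k > 0" "even k \<Longrightarrow> mu D k < 0" "1 \<le> \<bar>mu D k\<bar>"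
    "\<bar>mu D k\<bar> \<le> 2 * \<lfloor>sqrt (real_of_int D)\<rfloor>"
proof -
  have r: "redM D (Qseq D (k-1))" by (rule Qseq_red[OF assms(1,2)])
  note st = nbr_step[OF assms(1,2) r]
  have s: "if even (k-1) then Qseq D (k-1) $1$1 > 0 else Qseq D (k-1) $1$1 < 0"
    by (rule Qseq_sign[OF assms(1,2)])
  have ac: "Qseq D (k-1) $1$1 * Qseq D (k-1) $2$2 < 0" using r unfolding redM_def using red_facts(1) by blast
  show "1 \<le> \<bar>mu D k\<bar>" "\<bar>mu D k\<bar> \<le> 2 * \<lfloor>sqrt (real_of_int D)\<rfloor>" using st unfolding mu_def by auto
  show "odd k \<Longrightarrow> mu D k > 0"
  proof -
    assume "odd k"
    then have "even (k-1)" using assms(3) by simp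
    then show ?thesis using s ac st(3) unfolding mu_def by (auto simp: mult_less_0_iff)
  qed
  show "even k \<Longrightarrow> mu D k < 0"
  proof -
    assume "even k"
    then have "odd (k-1)" using assms(3) by simp
    then show ?thesis using s ac st(3) unfolding mu_def by (auto simp: mult_less_0_iff)
  qed
qed

lemma Sseq_pos: "1 \<le> k \<Longrightarrow> Sseq D (int k) = mat2 0 1 (-1) (mu D k)"
  unfolding Sseq_def Spos_def nbr_S_def mu_def by simp


lemma red_bound:
  assumes "red D a b c"
  shows "\<bar>a\<bar> \<le> 2*D" "\<bar>b\<bar> \<le> 2*D" "\<bar>c\<bar> \<le> 2*D"
proof -
  let ?s = "sqrt (real_of_int D)"
  note F = red_facts[OF assms]
  have D1: "1 \<le> D" using F(6) by simp
  have "?s * 1 \<le> ?s * ?s" using D1 by (intro mult_left_mono) auto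
  then have sD: "?s \<le> real_of_int D" using F(6) by simp
  have bs: "real_of_int b < ?s" "0 < b" using assms unfolding red_def by auto
  have "real_of_int \<bar>a\<bar> < ?s + b" using assms unfolding red_def by auto
  then have "real_of_int \<bar>a\<bar> \<le> real_of_int (2*D)" using sD bs by simp
  then show "\<bar>a\<bar> \<le> 2*D" by (simp only: of_int_le_iff)
  have "real_of_int \<bar>c\<bar> \<le> real_of_int (2*D)" using F(4) sD bs by simp
  then show "\<bar>c\<bar> \<le> 2*D" by (simp only: of_int_le_iff)
  have "real_of_int \<bar>b\<bar> \<le> real_of_int (2*D)" using sD bs by simp
  then show "\<bar>b\<bar> \<le> 2*D" by (simp only: of_int_le_iff)
qed

lemma redM_finite: "finite {Q. redM D Q}"
proof -
  let ?K = "{-(2*D)..2*D}"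
  have "{Q. redM D Q} \<subseteq> (\<lambda>(a,b,c). mat2 a b b c) ` (?K \<times> ?K \<times> ?K)"
  proof
    fix Q assume "Q \<in> {Q. redM D Q}"
    then have r: "red D (Q$1$1) (Q$1$2) (Q$2$2)" and sy: "Q$2$1 = Q$1$2" unfolding redM_def by auto
    note B = red_bound[OF r]
    have "Q = mat2 (Q$1$1) (Q$1$2) (Q$1$2) (Q$2$2)" using mat2_eta[of Q] sy by simp
    moreover have "(Q$1$1, Q$1$2, Q$2$2) \<in> ?K \<times> ?K \<times> ?K" using B by auto
    ultimately show "Q \<in> (\<lambda>(a,b,c). mat2 a b b c) ` (?K \<times> ?K \<times> ?K)" by force
  qed
  then show ?thesis by (rule finite_subset) simp
qed

lemma right_nbr_inj:
  assumes "0 < D" "\<not> (\<exists>k::int. D = k^2)" "redM D P" "redM D Q" "right_nbr D P = right_nbr D Q"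
  shows "P = Q"
proof -
  let ?s = "sqrt (real_of_int D)"
  have rP: "red D (P$1$1) (P$1$2) (P$2$2)" and sP: "P$2$1 = P$1$2" using assms(3) unfolding redM_def by auto
  have rQ: "red D (Q$1$1) (Q$1$2) (Q$2$2)" and sQ: "Q$2$1 = Q$1$2" using assms(4) unfolding redM_def by auto
  have e1: "P$2$2 = Q$2$2" and e2: "- P$1$2 - nbr_mu D P * P$2$2 = - Q$1$2 - nbr_mu D Q * Q$2$2"
    using assms(5) sP sQ unfolding right_nbr_mat2 Let_def mat2_eq_iff by auto
  define c where "c = Q$2$2"
  have c0: "c \<noteq> 0" using red_facts(2)[OF rQ] c_def by simp
  have "real_of_int (P$1$2) > ?s - real_of_int \<bar>c\<bar>" using red_facts(3)[OF rP] e1 c_def by simp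
  moreover have "real_of_int (Q$1$2) > ?s - real_of_int \<bar>c\<bar>" using red_facts(3)[OF rQ] c_def by simp
  moreover have "real_of_int (P$1$2) < ?s" "real_of_int (Q$1$2) < ?s" using rP rQ unfolding red_def by auto
  ultimately have "\<bar>real_of_int (P$1$2) - real_of_int (Q$1$2)\<bar> < real_of_int \<bar>c\<bar>" by linarith
  then have lt: "\<bar>P$1$2 - Q$1$2\<bar> < \<bar>c\<bar>" by (simp only: of_int_diff[symmetric] of_int_abs[symmetric] of_int_less_iff)
  have "P$1$2 - Q$1$2 = (nbr_mu D Q - nbr_mu D P) * c" using e1 e2 c_def by (simp add: algebra_simps)
  then have "\<bar>nbr_mu D Q - nbr_mu D P\<bar> * \<bar>c\<bar> < 1 * \<bar>c\<bar>" using lt by (simp add: abs_mult)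
  then have "\<bar>nbr_mu D Q - nbr_mu D P\<bar> < 1" by (rule mult_right_less_imp_less) simp
  then have "nbr_mu D Q = nbr_mu D P" by simp
  then have b: "P$1$2 = Q$1$2" using e1 e2 by simp
  have "P$1$1 * c = Q$1$1 * c" using rP rQ b e1 c_def unfolding red_def by (auto simp: algebra_simps)
  then have a: "P$1$1 = Q$1$1" using c0 by simp
  show "P = Q" using mat2_eta[of P] mat2_eta[of Q] a b e1 sP sQ by metis
qed

lemma Qseq_back:
  assumes "0 < D" "\<not> (\<exists>k::int. D = k^2)"
  shows "Qseq D (i + n) = Qseq D i \<Longrightarrow> Qseq D n = Qseq D 0"
proof (induction i)
  case 0 then show ?case by simp
next
  case (Suc i)
  then have "right_nbr D (Qseq D (i + n)) = right_nbr D (Qseq D i)" by (simp add: Qseq_Suc)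
  then have "Qseq D (i + n) = Qseq D i" by (rule right_nbr_inj[OF assms Qseq_red[OF assms] Qseq_red[OF assms]])
  then show ?case by (rule Suc.IH)
qed

lemma Qseq_periodic:
  assumes "0 < D" "\<not> (\<exists>k::int. D = k^2)"
  shows "\<exists>n. 0 < n \<and> (\<forall>j. Qseq D (j + n) = Qseq D j)"
proof -
  have "range (Qseq D) \<subseteq> {Q. redM D Q}" using Qseq_red[OF assms] by auto
  then have "finite (range (Qseq D))" using redM_finite finite_subset by blast
  then have "\<not> inj (Qseq D)" using finite_imageD infinite_UNIV_nat by blast
  then obtain i j where ij: "i \<noteq> j" "Qseq D i = Qseq D j" unfolding inj_def by blast
  obtain i j where ij: "i < j" "Qseq D i = Qseq D j"
    using ij by (metis linorder_neqE_nat)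
  define n where "n = j - i"
  have n0: "0 < n" using ij n_def by simp
  have "Qseq D (i + n) = Qseq D i" using ij n_def by simp
  then have q0: "Qseq D n = Qseq D 0" by (rule Qseq_back[OF assms])
  have "Qseq D (k + n) = Qseq D k" for k
    by (induction k) (simp_all add: q0 Qseq_Suc)
  then show ?thesis using n0 by blast
qed

lemma cyc_len_props:
  assumes "0 < D" "\<not> (\<exists>k::int. D = k^2)"
  shows "0 < cyc_len D" "even (cyc_len D)"
proof -
  have "0 < cyc_len D \<and> (\<forall>j. Qseq D (j + cyc_len D) = Qseq D j)"
    unfolding cyc_len_def by (rule LeastI_ex[OF Qseq_periodic[OF assms]])
  then have c0: "0 < cyc_len D" and q: "Qseq D (cyc_len D) = Qseq D 0" by (auto dest: spec[of _ 0])
  show "0 < cyc_len D" by (rule c0)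
  have "Qseq D 0 $1$1 > 0" using Qseq_sign[OF assms, of 0] by simp
  then have "Qseq D (cyc_len D) $1$1 > 0" using q by simp
  then show "even (cyc_len D)" using Qseq_sign[OF assms, of "cyc_len D"] by (auto split: if_splits)
qed


lemma inv2_S: "inv2 (mat2 0 1 (-1) \<mu>) = mat2 \<mu> (-1) 1 0"
  unfolding inv2_def
proof (rule the_equality)
  show "mat2 0 1 (- 1) \<mu> ** mat2 \<mu> (- 1) 1 0 = mat 1 \<and> mat2 \<mu> (- 1) 1 0 ** mat2 0 1 (- 1) \<mu> = mat 1"
    by (simp add: mat2_mult mat2_one)
next
  fix N assume h: "mat2 0 1 (- 1) \<mu> ** N = mat 1 \<and> N ** mat2 0 1 (- 1) \<mu> = mat 1"
  have "N = N ** (mat2 0 1 (- 1) \<mu> ** mat2 \<mu> (- 1) 1 0)" by (simp add: mat2_mult mat2_one[symmetric])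
  also have "\<dots> = (N ** mat2 0 1 (- 1) \<mu>) ** mat2 \<mu> (- 1) 1 0" by (simp add: matrix_mul_assoc)
  also have "\<dots> = mat2 \<mu> (- 1) 1 0" using h by simp
  finally show "N = mat2 \<mu> (- 1) 1 0" .
qed

lemma Sseq_neg:
  assumes "0 < D" "\<not> (\<exists>k::int. D = k^2)" "1 \<le> k"
  shows "\<exists>\<mu>. Sseq D (- int k) = mat2 \<mu> (-1) 1 0 \<and> (odd k \<longrightarrow> \<mu> > 0) \<and> (even k \<longrightarrow> \<mu> < 0) \<and>
           1 \<le> \<bar>\<mu>\<bar> \<and> \<bar>\<mu>\<bar> \<le> 2 * \<lfloor>sqrt (real_of_int D)\<rfloor>"
proof -
  define c where "c = cyc_len D"
  have c0: "0 < c" and ce: "even c" using cyc_len_props[OF assms(1,2)] c_def by auto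
  define r where "r = (- int k - 1) mod int c + 1"
  have r1: "1 \<le> r" using c0 r_def by simp
  define k0 where "k0 = nat r"
  have k01: "1 \<le> k0" using r1 k0_def by simp
  have "even (int c)" using ce by simp
  then have "even (int c * ((- int k - 1) div int c))" by simp
  then obtain t where t: "int c * ((- int k - 1) div int c) = 2 * t" by blast
  have "r = (- int k - 1) - int c * ((- int k - 1) div int c) + 1"
    unfolding r_def by (simp add: minus_div_mult_eq_mod[symmetric])
  then have "r = - int k - 2 * t" using t by simp
  then have "even r \<longleftrightarrow> even (- int k)" by presburger
  then have par: "even k0 \<longleftrightarrow> even k" using r1 k0_def by (simp add: even_nat_iff)
  have S: "Sseq D (- int k) = mat2 (mu D k0) (-1) 1 0"
    using assms(3) unfolding Sseq_def Spos_def nbr_S_def mu_def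
    by (simp add: c_def[symmetric] r_def[symmetric] k0_def[symmetric] inv2_S)
  show ?thesis using S mu_props[OF assms(1,2) k01] par by auto
qed

lemma mprodn_left: "mprodn f a (Suc n) = f a ** mprodn f (a + 1) n"
proof (induction n arbitrary: a)
  case 0 then show ?case by simp
next
  case (Suc n)
  have "mprodn f a (Suc (Suc n)) = mprodn f a (Suc n) ** f (a + int (Suc n))" by simp
  also have "\<dots> = (f a ** mprodn f (a + 1) n) ** f (a + 1 + int n)" using Suc.IH by (simp add: algebra_simps)
  also have "\<dots> = f a ** mprodn f (a + 1) (Suc n)" by (simp add: matrix_mul_assoc)
  finally show ?case .
qed


definition patP :: "nat \<Rightarrow> int \<Rightarrow> int \<Rightarrow> int \<Rightarrow> int \<Rightarrow> bool" where
  "patP k a b c d \<longleftrightarrow>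
     (k = 0 \<longrightarrow> a \<ge> 0 \<and> b \<ge> 0 \<and> c \<ge> 0 \<and> d \<ge> 0) \<and>
     (k = 1 \<longrightarrow> a \<le> 0 \<and> b \<ge> 0 \<and> c \<le> 0 \<and> d \<ge> 0) \<and>
     (k = 2 \<longrightarrow> a \<le> 0 \<and> b \<le> 0 \<and> c \<le> 0 \<and> d \<le> 0) \<and>
     (k = 3 \<longrightarrow> a \<ge> 0 \<and> b \<le> 0 \<and> c \<ge> 0 \<and> d \<le> 0)"

lemma abs_add_same: "(0 \<le> x \<and> 0 \<le> y) \<or> (x \<le> 0 \<and> y \<le> 0) \<Longrightarrow> \<bar>x + y\<bar> = \<bar>x\<bar> + \<bar>(y::int)\<bar>"
  by auto

lemma step_k:
  assumes "patP k A B C E" "k < 4" "even k \<Longrightarrow> \<mu> > 0" "odd k \<Longrightarrow> \<mu> < 0"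
  shows "patP (Suc k mod 4) (-B) (A+B*\<mu>) (-E) (C+E*\<mu>) \<and> \<bar>A+B*\<mu>\<bar> = \<bar>A\<bar>+\<bar>B\<bar>*\<bar>\<mu>\<bar> \<and> \<bar>C+E*\<mu>\<bar> = \<bar>C\<bar>+\<bar>E\<bar>*\<bar>\<mu>\<bar>"
proof -
  have "k = 0 \<or> k = 1 \<or> k = 2 \<or> k = 3" using assms(2) by auto
  then show ?thesis
  proof (elim disjE)
    assume k: "k = 0"
    then have m: "\<mu> > 0" using assms by simp
    have "0 \<le> A" "0 \<le> B" "0 \<le> C" "0 \<le> E" using assms(1) k unfolding patP_def by auto
    moreover have "0 \<le> B*\<mu>" "0 \<le> E*\<mu>" using calculation m by simp_all
    ultimately show ?thesis using k m by (simp add: patP_def abs_add_same abs_mult[symmetric])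
  next
    assume k: "k = 1"
    then have m: "\<mu> < 0" using assms by simp
    have "A \<le> 0" "0 \<le> B" "C \<le> 0" "0 \<le> E" using assms(1) k unfolding patP_def by auto
    moreover have "B*\<mu> \<le> 0" "E*\<mu> \<le> 0" using calculation m by (simp_all add: mult_nonneg_nonpos)
    ultimately show ?thesis using k m by (simp add: patP_def abs_add_same abs_mult[symmetric])
  next
    assume k: "k = 2"
    then have m: "\<mu> > 0" using assms by simp
    have "A \<le> 0" "B \<le> 0" "C \<le> 0" "E \<le> 0" using assms(1) k unfolding patP_def by auto
    moreover have "B*\<mu> \<le> 0" "E*\<mu> \<le> 0" using calculation m by (simp_all add: mult_nonpos_nonneg)
    ultimately show ?thesis using k m by (simp add: patP_def abs_add_same abs_mult[symmetric])
  next
    assume k: "k = 3"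
    then have m: "\<mu> < 0" using assms by simp
    have "0 \<le> A" "B \<le> 0" "0 \<le> C" "E \<le> 0" using assms(1) k unfolding patP_def by auto
    moreover have "0 \<le> B*\<mu>" "0 \<le> E*\<mu>" using calculation m by (simp_all add: mult_nonpos_nonpos)
    ultimately show ?thesis using k m by (simp add: patP_def abs_add_same abs_mult[symmetric])
  qed
qed

lemma pos_step:
  assumes "patP (n mod 4) A B C E" "odd (Suc n) \<Longrightarrow> \<mu> > 0" "even (Suc n) \<Longrightarrow> \<mu> < 0"
  shows "patP (Suc n mod 4) (-B) (A+B*\<mu>) (-E) (C+E*\<mu>) \<and> \<bar>A+B*\<mu>\<bar> = \<bar>A\<bar>+\<bar>B\<bar>*\<bar>\<mu>\<bar> \<and> \<bar>C+E*\<mu>\<bar> = \<bar>C\<bar>+\<bar>E\<bar>*\<bar>\<mu>\<bar>"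
proof -
  have e1: "even (n mod 4) \<longleftrightarrow> even n" by presburger
  have e2: "Suc (n mod 4) mod 4 = Suc n mod 4" by presburger
  show ?thesis using step_k[OF assms(1)] assms(2,3) e1 e2 by simp
qed

lemma pos_main:
  assumes "0 < D" "\<not> (\<exists>k::int. D = k^2)"
  shows "patP (n mod 4) (mprodn (Sseq D) 1 n $1$1) (mprodn (Sseq D) 1 n $1$2) (mprodn (Sseq D) 1 n $2$1) (mprodn (Sseq D) 1 n $2$2)
     \<and> absM (mprodn (Sseq D) 1 n) = mprodn (\<lambda>i. absM (Sseq D i)) 1 n"
proof (induction n)
  case 0
  then show ?case by (simp add: patP_def mat2_one absM_mat2)
next
  case (Suc n)
  obtain A B C E where Le: "mprodn (Sseq D) 1 n = mat2 A B C E" using mat2_eta by blast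
  define \<mu> where "\<mu> = mu D (Suc n)"
  have S: "Sseq D (1 + int n) = mat2 0 1 (-1) \<mu>" using Sseq_pos[of "Suc n" D] \<mu>_def by simp
  have m1: "odd (Suc n) \<Longrightarrow> \<mu> > 0" and m2: "even (Suc n) \<Longrightarrow> \<mu> < 0"
    using mu_props[OF assms, of "Suc n"] \<mu>_def by auto
  have IH: "patP (n mod 4) A B C E" "mat2 \<bar>A\<bar> \<bar>B\<bar> \<bar>C\<bar> \<bar>E\<bar> = mprodn (\<lambda>i. absM (Sseq D i)) 1 n"
    using Suc.IH unfolding Le by (auto simp: absM_mat2)
  note st = pos_step[OF IH(1) m1 m2]
  have e: "mprodn (Sseq D) 1 (Suc n) = mat2 (- B) (A + B*\<mu>) (- E) (C + E*\<mu>)"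
    by (simp only: mprodn.simps Le S mat2_mult) simp
  have "mprodn (\<lambda>i. absM (Sseq D i)) 1 (Suc n) = mat2 \<bar>A\<bar> \<bar>B\<bar> \<bar>C\<bar> \<bar>E\<bar> ** absM (mat2 0 1 (-1) \<mu>)"
    by (simp only: mprodn.simps IH(2) S)
  also have "\<dots> = mat2 \<bar>B\<bar> (\<bar>A\<bar> + \<bar>B\<bar>*\<bar>\<mu>\<bar>) \<bar>E\<bar> (\<bar>C\<bar> + \<bar>E\<bar>*\<bar>\<mu>\<bar>)"
    by (simp add: absM_mat2 mat2_mult)
  finally show ?case using st unfolding e by (simp add: absM_mat2)
qed

definition patN :: "nat \<Rightarrow> int \<Rightarrow> int \<Rightarrow> int \<Rightarrow> int \<Rightarrow> bool" where
  "patN k a b c d \<longleftrightarrow>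
     (k = 0 \<longrightarrow> a \<ge> 0 \<and> b \<le> 0 \<and> c \<le> 0 \<and> d \<ge> 0) \<and>
     (k = 1 \<longrightarrow> a \<ge> 0 \<and> b \<le> 0 \<and> c \<ge> 0 \<and> d \<le> 0) \<and>
     (k = 2 \<longrightarrow> a \<le> 0 \<and> b \<ge> 0 \<and> c \<ge> 0 \<and> d \<le> 0) \<and>
     (k = 3 \<longrightarrow> a \<le> 0 \<and> b \<ge> 0 \<and> c \<le> 0 \<and> d \<ge> 0)"

lemma stepN_k:
  assumes "patN k A B C E" "k < 4" "even k \<Longrightarrow> \<mu> > 0" "odd k \<Longrightarrow> \<mu> < 0"
  shows "patN (Suc k mod 4) (\<mu>*A - C) (\<mu>*B - E) A B \<and> \<bar>\<mu>*A - C\<bar> = \<bar>\<mu>\<bar>*\<bar>A\<bar>+\<bar>C\<bar> \<and> \<bar>\<mu>*B - E\<bar> = \<bar>\<mu>\<bar>*\<bar>B\<bar>+\<bar>E\<bar>"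
proof -
  have "k = 0 \<or> k = 1 \<or> k = 2 \<or> k = 3" using assms(2) by auto
  then show ?thesis
  proof (elim disjE)
    assume k: "k = 0"
    then have m: "\<mu> > 0" using assms by simp
    have sg: "0 \<le> A" "B \<le> 0" "C \<le> 0" "0 \<le> E" using assms(1) k unfolding patN_def by auto
    have p: "0 \<le> \<mu>*A" "\<mu>*B \<le> 0" using sg m by (auto simp: mult_nonneg_nonpos mult_nonpos_nonneg mult_nonpos_nonpos mult_nonneg_nonneg)
    have l: "0 \<le> \<mu>*A - C" "\<mu>*B - E \<le> 0" using p sg by linarith+
    have ab: "\<bar>\<mu>*A - C\<bar> = \<bar>\<mu>*A\<bar> + \<bar>C\<bar>" "\<bar>\<mu>*B - E\<bar> = \<bar>\<mu>*B\<bar> + \<bar>E\<bar>" using p sg by arith+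
    have pn: "patN (Suc k mod 4) (\<mu>*A - C) (\<mu>*B - E) A B" unfolding patN_def using k l sg by simp
    show ?thesis using pn ab by (simp add: abs_mult)
  next
    assume k: "k = 1"
    then have m: "\<mu> < 0" using assms by simp
    have sg: "0 \<le> A" "B \<le> 0" "0 \<le> C" "E \<le> 0" using assms(1) k unfolding patN_def by auto
    have p: "\<mu>*A \<le> 0" "0 \<le> \<mu>*B" using sg m by (auto simp: mult_nonneg_nonpos mult_nonpos_nonneg mult_nonpos_nonpos mult_nonneg_nonneg)
    have l: "\<mu>*A - C \<le> 0" "0 \<le> \<mu>*B - E" using p sg by linarith+
    have ab: "\<bar>\<mu>*A - C\<bar> = \<bar>\<mu>*A\<bar> + \<bar>C\<bar>" "\<bar>\<mu>*B - E\<bar> = \<bar>\<mu>*B\<bar> + \<bar>E\<bar>" using p sg by arith+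
    have pn: "patN (Suc k mod 4) (\<mu>*A - C) (\<mu>*B - E) A B" unfolding patN_def using k l sg by simp
    show ?thesis using pn ab by (simp add: abs_mult)
  next
    assume k: "k = 2"
    then have m: "\<mu> > 0" using assms by simp
    have sg: "A \<le> 0" "0 \<le> B" "0 \<le> C" "E \<le> 0" using assms(1) k unfolding patN_def by auto
    have p: "\<mu>*A \<le> 0" "0 \<le> \<mu>*B" using sg m by (auto simp: mult_nonneg_nonpos mult_nonpos_nonneg mult_nonpos_nonpos mult_nonneg_nonneg)
    have l: "\<mu>*A - C \<le> 0" "0 \<le> \<mu>*B - E" using p sg by linarith+
    have ab: "\<bar>\<mu>*A - C\<bar> = \<bar>\<mu>*A\<bar> + \<bar>C\<bar>" "\<bar>\<mu>*B - E\<bar> = \<bar>\<mu>*B\<bar> + \<bar>E\<bar>" using p sg by arith+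
    have pn: "patN (Suc k mod 4) (\<mu>*A - C) (\<mu>*B - E) A B" unfolding patN_def using k l sg by simp
    show ?thesis using pn ab by (simp add: abs_mult)
  next
    assume k: "k = 3"
    then have m: "\<mu> < 0" using assms by simp
    have sg: "A \<le> 0" "0 \<le> B" "C \<le> 0" "0 \<le> E" using assms(1) k unfolding patN_def by auto
    have p: "0 \<le> \<mu>*A" "\<mu>*B \<le> 0" using sg m by (auto simp: mult_nonneg_nonpos mult_nonpos_nonneg mult_nonpos_nonpos mult_nonneg_nonneg)
    have l: "0 \<le> \<mu>*A - C" "\<mu>*B - E \<le> 0" using p sg by linarith+
    have ab: "\<bar>\<mu>*A - C\<bar> = \<bar>\<mu>*A\<bar> + \<bar>C\<bar>" "\<bar>\<mu>*B - E\<bar> = \<bar>\<mu>*B\<bar> + \<bar>E\<bar>" using p sg by arith+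
    have pn: "patN (Suc k mod 4) (\<mu>*A - C) (\<mu>*B - E) A B" unfolding patN_def using k l sg by simp
    show ?thesis using pn ab by (simp add: abs_mult)
  qed
qed

lemma neg_main:
  assumes "0 < D" "\<not> (\<exists>k::int. D = k^2)"
  shows "patN (n mod 4) (mprodn (Sseq D) (- int n) n $1$1) (mprodn (Sseq D) (- int n) n $1$2)
            (mprodn (Sseq D) (- int n) n $2$1) (mprodn (Sseq D) (- int n) n $2$2)
     \<and> absM (mprodn (Sseq D) (- int n) n) = mprodn (\<lambda>i. absM (Sseq D i)) (- int n) n"
proof (induction n)
  case 0
  then show ?case by (simp add: patN_def mat2_one absM_mat2)
next
  case (Suc n)
  define L where "L = mprodn (Sseq D) (- int n) n"
  obtain \<mu> where S: "Sseq D (- int (Suc n)) = mat2 \<mu> (-1) 1 0" and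
    m1: "odd (Suc n) \<Longrightarrow> \<mu> > 0" and m2: "even (Suc n) \<Longrightarrow> \<mu> < 0"
    using Sseq_neg[OF assms, of "Suc n"] by auto
  have e1: "even (n mod 4) \<longleftrightarrow> even n" by presburger
  have e2: "Suc (n mod 4) mod 4 = Suc n mod 4" by presburger
  have Le: "L = mat2 (L$1$1) (L$1$2) (L$2$1) (L$2$2)" by (rule mat2_eta)
  have IH: "patN (n mod 4) (L$1$1) (L$1$2) (L$2$1) (L$2$2)" "absM L = mprodn (\<lambda>i. absM (Sseq D i)) (- int n) n"
    using Suc.IH L_def by auto
  have st: "patN (Suc n mod 4) (\<mu>*L$1$1 - L$2$1) (\<mu>*L$1$2 - L$2$2) (L$1$1) (L$1$2) \<and>
     \<bar>\<mu>*L$1$1 - L$2$1\<bar> = \<bar>\<mu>\<bar>*\<bar>L$1$1\<bar>+\<bar>L$2$1\<bar> \<and> \<bar>\<mu>*L$1$2 - L$2$2\<bar> = \<bar>\<mu>\<bar>*\<bar>L$1$2\<bar>+\<bar>L$2$2\<bar>"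
    using stepN_k[OF IH(1), of \<mu>] m1 m2 e1 e2 by simp
  have idx: "- int (Suc n) + 1 = - int n" by simp
  have e: "mprodn (Sseq D) (- int (Suc n)) (Suc n) = mat2 (\<mu>*L$1$1 - L$2$1) (\<mu>*L$1$2 - L$2$2) (L$1$1) (L$1$2)"
    unfolding mprodn_left idx L_def[symmetric] S by (subst Le) (simp add: mat2_mult)
  have "mprodn (\<lambda>i. absM (Sseq D i)) (- int (Suc n)) (Suc n) = absM (mat2 \<mu> (-1) 1 0) ** absM L"
    unfolding mprodn_left idx using IH(2) S by simp
  also have "\<dots> = mat2 (\<bar>\<mu>\<bar>*\<bar>L$1$1\<bar>+\<bar>L$2$1\<bar>) (\<bar>\<mu>\<bar>*\<bar>L$1$2\<bar>+\<bar>L$2$2\<bar>) \<bar>L$1$1\<bar> \<bar>L$1$2\<bar>"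
    by (subst Le) (simp add: absM_mat2 mat2_mult)
  finally show ?case using st unfolding e by (simp add: absM_mat2)
qed


definition invR :: "int \<Rightarrow> int \<Rightarrow> int \<Rightarrow> int \<Rightarrow> int \<Rightarrow> bool" where
  "invR M A B C E \<longleftrightarrow> 1 \<le> A \<and> A \<le> B \<and> A \<le> C \<and> B \<le> E \<and> C \<le> E \<and>
     C \<le> (M+1)*A \<and> E \<le> (M+1)*B \<and> B \<le> (M+1)*A"

definition invL :: "int \<Rightarrow> int \<Rightarrow> int \<Rightarrow> int \<Rightarrow> int \<Rightarrow> bool" where
  "invL M A B C E \<longleftrightarrow> 1 \<le> E \<and> E \<le> B \<and> E \<le> C \<and> B \<le> A \<and> C \<le> A \<and>
     C \<le> (M+1)*E \<and> A \<le> (M+1)*B \<and> B \<le> (M+1)*E"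

lemma invR_step:
  assumes "invR M A B C E" "1 \<le> m" "m \<le> M"
  shows "invR M B (A + B*m) E (C + E*m)"
proof -
  have h: "1 \<le> A" "A \<le> B" "A \<le> C" "B \<le> E" "C \<le> E" "C \<le> (M+1)*A" "E \<le> (M+1)*B" "B \<le> (M+1)*A"
    using assms(1) unfolding invR_def by auto
  have B0: "0 \<le> B" "0 \<le> E" "0 \<le> A" "0 \<le> C" using h by linarith+
  have "B*1 \<le> B*m" "E*1 \<le> E*m" using B0 assms(2) by (intro mult_left_mono; simp)+
  then have f1: "B \<le> B*m" "E \<le> E*m" by (metis mult.right_neutral)+
  have f2: "B*m \<le> E*m" using h B0 assms(2) by (intro mult_right_mono) auto
  have f3: "B*m \<le> B*M" using B0 assms(3) by (intro mult_left_mono) auto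
  have f4: "E*m \<le> ((M+1)*B)*m" using h assms(2) by (intro mult_right_mono) auto
  have f5: "(M+1)*(A+B*m) = (M+1)*A + ((M+1)*B)*m" "(M+1)*B = B + B*M" by (simp_all add: algebra_simps)
  show ?thesis unfolding invR_def using h B0 f1 f2 f3 f4 f5 by (intro conjI; linarith)
qed

lemma invL_step:
  assumes "invL M A B C E" "1 \<le> m" "m \<le> M"
  shows "invL M (m*A + C) (m*B + E) A B"
proof -
  have h: "1 \<le> E" "E \<le> B" "E \<le> C" "B \<le> A" "C \<le> A" "C \<le> (M+1)*E" "A \<le> (M+1)*B" "B \<le> (M+1)*E"
    using assms(1) unfolding invL_def by auto
  have B0: "0 \<le> B" "0 \<le> A" "0 \<le> C" "0 \<le> E" using h by linarith+
  have "1*B \<le> m*B" "1*A \<le> m*A" using B0 assms(2) by (intro mult_right_mono; simp)+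
  then have f1: "B \<le> m*B" "A \<le> m*A" by (metis mult.left_neutral)+
  have f2: "m*B \<le> m*A" using h assms(2) by (intro mult_left_mono) auto
  have f3: "m*B \<le> M*B" using B0 assms(3) by (intro mult_right_mono) auto
  have f4: "m*A \<le> m*((M+1)*B)" using h assms(2) by (intro mult_left_mono) auto
  have f5: "(M+1)*(m*B+E) = m*((M+1)*B) + (M+1)*E" "(M+1)*B = B + M*B" by (simp_all add: algebra_simps)
  show ?thesis unfolding invL_def using h B0 f1 f2 f3 f4 f5 by (intro conjI; linarith)
qed

lemma absS_pos:
  assumes "0 < D" "\<not> (\<exists>k::int. D = k^2)" "1 \<le> k"
  shows "\<exists>m. absM (Sseq D (int k)) = mat2 0 1 1 m \<and> 1 \<le> m \<and> m \<le> 2 * \<lfloor>sqrt (real_of_int D)\<rfloor>"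
  using Sseq_pos[OF assms(3)] mu_props(3,4)[OF assms] by (auto simp: absM_mat2)

lemma absS_neg:
  assumes "0 < D" "\<not> (\<exists>k::int. D = k^2)" "1 \<le> k"
  shows "\<exists>m. absM (Sseq D (- int k)) = mat2 m 1 1 0 \<and> 1 \<le> m \<and> m \<le> 2 * \<lfloor>sqrt (real_of_int D)\<rfloor>"
  using Sseq_neg[OF assms] by (auto simp: absM_mat2)

lemma posR:
  assumes "0 < D" "\<not> (\<exists>k::int. D = k^2)" "2 \<le> n"
  shows "\<exists>A B C E. mprodn (\<lambda>i. absM (Sseq D i)) 1 n = mat2 A B C E \<and> invR (2 * \<lfloor>sqrt (real_of_int D)\<rfloor>) A B C E"
  using assms(3)
proof (induction n rule: nat_induct_at_least)
  case base
  obtain m1 where m1: "absM (Sseq D (int 1)) = mat2 0 1 1 m1" "1 \<le> m1" "m1 \<le> 2 * \<lfloor>sqrt (real_of_int D)\<rfloor>"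
    using absS_pos[OF assms(1,2), of 1] by auto
  obtain m2 where m2: "absM (Sseq D (int 2)) = mat2 0 1 1 m2" "1 \<le> m2" "m2 \<le> 2 * \<lfloor>sqrt (real_of_int D)\<rfloor>"
    using absS_pos[OF assms(1,2), of 2] by auto
  have "mprodn (\<lambda>i. absM (Sseq D i)) 1 2 = mat2 1 m2 m1 (1 + m1*m2)"
    using m1(1) m2(1) by (simp add: numeral_2_eq_2 mat2_one mat2_mult)
  moreover have "invR (2 * \<lfloor>sqrt (real_of_int D)\<rfloor>) 1 m2 m1 (1 + m1*m2)"
  proof -
    have f: "m1*m2 \<le> 2 * \<lfloor>sqrt (real_of_int D)\<rfloor> * m2" using m1 m2 by (intro mult_right_mono) auto
    have g: "m2 \<le> m1*m2" "m1 \<le> m1*m2" using m1 m2 by simp_all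
    have e: "(2 * \<lfloor>sqrt (real_of_int D)\<rfloor> + 1) * m2 = 2 * \<lfloor>sqrt (real_of_int D)\<rfloor> * m2 + m2"
      "(2 * \<lfloor>sqrt (real_of_int D)\<rfloor> + 1) * 1 = 2 * \<lfloor>sqrt (real_of_int D)\<rfloor> + 1" by (simp_all add: algebra_simps)
    show ?thesis unfolding invR_def using m1 m2 f g e by (intro conjI; linarith)
  qed
  ultimately show ?case by blast
next
  case (Suc n)
  then obtain A B C E where P: "mprodn (\<lambda>i. absM (Sseq D i)) 1 n = mat2 A B C E"
    and I: "invR (2 * \<lfloor>sqrt (real_of_int D)\<rfloor>) A B C E" by blast
  obtain m where m: "absM (Sseq D (int (Suc n))) = mat2 0 1 1 m" "1 \<le> m" "m \<le> 2 * \<lfloor>sqrt (real_of_int D)\<rfloor>"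
    using absS_pos[OF assms(1,2), of "Suc n"] by auto
  have "mprodn (\<lambda>i. absM (Sseq D i)) 1 (Suc n) = mat2 B (A + B*m) E (C + E*m)"
    using P m(1) by (simp add: mat2_mult add.commute)
  then show ?case using invR_step[OF I m(2,3)] by blast
qed

lemma negL:
  assumes "0 < D" "\<not> (\<exists>k::int. D = k^2)" "2 \<le> n"
  shows "\<exists>A B C E. mprodn (\<lambda>i. absM (Sseq D i)) (- int n) n = mat2 A B C E \<and> invL (2 * \<lfloor>sqrt (real_of_int D)\<rfloor>) A B C E"
  using assms(3)
proof (induction n rule: nat_induct_at_least)
  case base
  obtain m1 where m1: "absM (Sseq D (- int 1)) = mat2 m1 1 1 0" "1 \<le> m1" "m1 \<le> 2 * \<lfloor>sqrt (real_of_int D)\<rfloor>"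
    using absS_neg[OF assms(1,2), of 1] by auto
  obtain m2 where m2: "absM (Sseq D (- int 2)) = mat2 m2 1 1 0" "1 \<le> m2" "m2 \<le> 2 * \<lfloor>sqrt (real_of_int D)\<rfloor>"
    using absS_neg[OF assms(1,2), of 2] by auto
  have "mprodn (\<lambda>i. absM (Sseq D i)) (- int 2) 2 = mat2 (m2*m1 + 1) m2 m1 1"
    using m1(1) m2(1) by (simp add: numeral_2_eq_2 mat2_one mat2_mult)
  moreover have "invL (2 * \<lfloor>sqrt (real_of_int D)\<rfloor>) (m2*m1 + 1) m2 m1 1"
  proof -
    have f: "m2*m1 \<le> m2 * (2 * \<lfloor>sqrt (real_of_int D)\<rfloor>)" using m1 m2 by (intro mult_left_mono) auto
    have g: "m2 \<le> m2*m1" "m1 \<le> m2*m1" using m1 m2 by simp_all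
    have e: "(2 * \<lfloor>sqrt (real_of_int D)\<rfloor> + 1) * m2 = m2 * (2 * \<lfloor>sqrt (real_of_int D)\<rfloor>) + m2"
      "(2 * \<lfloor>sqrt (real_of_int D)\<rfloor> + 1) * 1 = 2 * \<lfloor>sqrt (real_of_int D)\<rfloor> + 1" by (simp_all add: algebra_simps)
    show ?thesis unfolding invL_def using m1 m2 f g e by (intro conjI; linarith)
  qed
  ultimately show ?case by blast
next
  case (Suc n)
  then obtain A B C E where P: "mprodn (\<lambda>i. absM (Sseq D i)) (- int n) n = mat2 A B C E"
    and I: "invL (2 * \<lfloor>sqrt (real_of_int D)\<rfloor>) A B C E" by blast
  obtain m where m: "absM (Sseq D (- int (Suc n))) = mat2 m 1 1 0" "1 \<le> m" "m \<le> 2 * \<lfloor>sqrt (real_of_int D)\<rfloor>"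
    using absS_neg[OF assms(1,2), of "Suc n"] by auto
  have idx: "- int (Suc n) + 1 = - int n" by simp
  have "mprodn (\<lambda>i. absM (Sseq D i)) (- int (Suc n)) (Suc n) = mat2 (m*A + C) (m*B + E) A B"
    unfolding mprodn_left idx using P m(1) by (simp add: mat2_mult)
  then show ?case using invL_step[OF I m(2,3)] by blast
qed


lemma maxmin:
  assumes "absM L = mat2 A B C E" "lo \<in> {A,B,C,E}" "hi \<in> {A,B,C,E}" "\<forall>x\<in>{A,B,C,E}. lo \<le> x \<and> x \<le> hi"
  shows "max_entry L = hi" "min_entry L = lo"
proof -
  have "\<bar>L$1$1\<bar> = A" "\<bar>L$1$2\<bar> = B" "\<bar>L$2$1\<bar> = C" "\<bar>L$2$2\<bar> = E"
    using arg_cong[OF assms(1), of "\<lambda>M. M$1$1"] arg_cong[OF assms(1), of "\<lambda>M. M$1$2"]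
      arg_cong[OF assms(1), of "\<lambda>M. M$2$1"] arg_cong[OF assms(1), of "\<lambda>M. M$2$2"]
    by (simp_all add: absM_def)
  then have S: "{\<bar>L $ i $ k\<bar> | i k. True} = {A,B,C,E}"
    using entries_set[of "\<lambda>i k. \<bar>L $ i $ k\<bar>"] by simp
  show "max_entry L = hi" unfolding max_entry_def S using assms(3,4) by (intro Max_eqI) auto
  show "min_entry L = lo" unfolding min_entry_def S using assms(2,4) by (intro Min_eqI) auto
qed

lemma ratio_final:
  assumes "0 < D" "\<not> (\<exists>k::int. D = k^2)" "M = 2 * \<lfloor>sqrt (real_of_int D)\<rfloor>"
    "1 \<le> lo" "lo \<le> hi" "hi \<le> (M+1)*X" "X \<le> (M+1)*lo"
  shows "1 \<le> real_of_int hi / real_of_int lo \<and> real_of_int hi / real_of_int lo \<le> 4 * (real_of_int D + sqrt (real_of_int D))"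
proof -
  let ?s = "sqrt (real_of_int D)"
  let ?l = "\<lfloor>?s\<rfloor>"
  have s1: "1 \<le> ?s" using assms(1) by simp
  have l1: "1 \<le> ?l" using s1 by (simp add: le_floor_iff)
  have "real_of_int ?l \<le> ?s" by simp
  moreover have "real_of_int ?l \<noteq> ?s" using sqrt_nonint[OF assms(1,2)] by metis
  ultimately have ls: "real_of_int ?l < ?s" by linarith
  have l0: "0 \<le> real_of_int ?l" using l1 by simp
  have "real_of_int ?l * real_of_int ?l < ?s * ?s" by (rule mult_strict_mono[OF ls ls]) (use l1 in simp_all)
  then have "real_of_int (?l * ?l) < real_of_int D" using assms(1) by simp
  then have "?l * ?l < D" by (simp only: of_int_less_iff)
  then have ll: "?l * ?l \<le> D - 1" by simp
  have M0: "0 \<le> M + 1" using assms(3) l1 by simp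
  have "hi \<le> (M+1)*((M+1)*lo)" using assms(6) mult_left_mono[OF assms(7) M0] by linarith
  then have h: "real_of_int hi \<le> real_of_int ((M+1)*(M+1)) * real_of_int lo" by (simp add: algebra_simps flip: of_int_mult of_int_le_iff)
  have lo0: "0 < real_of_int lo" using assms(4) by simp
  have "(M+1)*(M+1) = 4*(?l*?l) + 4*?l + 1" using assms(3) by (simp add: algebra_simps)
  also have "\<dots> \<le> 4*(D-1) + 4*?l + 1" using ll by simp
  finally have "real_of_int ((M+1)*(M+1)) \<le> real_of_int (4*(D-1) + 4*?l + 1)" by (simp only: of_int_le_iff)
  then have "real_of_int ((M+1)*(M+1)) \<le> 4 * (real_of_int D + ?s)" using ls by simp
  then have "real_of_int hi \<le> 4 * (real_of_int D + ?s) * real_of_int lo"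
    using h lo0 by (meson less_le_not_le mult_right_mono order_trans)
  then have r2: "real_of_int hi / real_of_int lo \<le> 4 * (real_of_int D + ?s)" using lo0 by (simp add: divide_le_eq)
  have "real_of_int lo \<le> real_of_int hi" using assms(5) by simp
  then have "1 \<le> real_of_int hi / real_of_int lo" using lo0 by (simp add: le_divide_eq)
  then show ?thesis using r2 by simp
qed

lemma part1:
  assumes "0 < D" "\<not> (\<exists>k::int. D = k^2)" "0 < j"
  shows "let L = Lmat D j in
              (j mod 4 = 0 \<longrightarrow> L$1$1 \<ge> 0 \<and> L$1$2 \<ge> 0 \<and> L$2$1 \<ge> 0 \<and> L$2$2 \<ge> 0) \<and>
              (j mod 4 = 1 \<longrightarrow> L$1$1 \<le> 0 \<and> L$1$2 \<ge> 0 \<and> L$2$1 \<le> 0 \<and> L$2$2 \<ge> 0) \<and>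
              (j mod 4 = 2 \<longrightarrow> L$1$1 \<le> 0 \<and> L$1$2 \<le> 0 \<and> L$2$1 \<le> 0 \<and> L$2$2 \<le> 0) \<and>
              (j mod 4 = 3 \<longrightarrow> L$1$1 \<ge> 0 \<and> L$1$2 \<le> 0 \<and> L$2$1 \<ge> 0 \<and> L$2$2 \<le> 0)"
proof -
  define n where "n = nat j"
  have jn: "j = int n" using assms(3) n_def by simp
  have L: "Lmat D j = mprodn (Sseq D) 1 n" unfolding Lmat_def n_def using assms(3) by simp
  have md: "j mod 4 = int (n mod 4)" unfolding jn by (simp add: zmod_int)
  have P: "patP (n mod 4) (Lmat D j $1$1) (Lmat D j $1$2) (Lmat D j $2$1) (Lmat D j $2$2)"
    using pos_main[OF assms(1,2), of n] L by simp
  have e: "int (n mod 4) = 0 \<longleftrightarrow> n mod 4 = 0" "int (n mod 4) = 1 \<longleftrightarrow> n mod 4 = 1"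
    "int (n mod 4) = 2 \<longleftrightarrow> n mod 4 = 2" "int (n mod 4) = 3 \<longleftrightarrow> n mod 4 = 3" by linarith+
  show ?thesis
    unfolding Let_def md e using P unfolding patP_def by blast
qed


lemma part2:
  assumes "0 < D" "\<not> (\<exists>k::int. D = k^2)" "0 < j"
  shows "absM (Lmat D j) = mprodn (\<lambda>i. absM (Sseq D i)) 1 (nat j) \<and>
         absM (Lmat D (- j)) = mprodn (\<lambda>i. absM (Sseq D i)) (- j) (nat j)"
proof -
  define n where "n = nat j"
  have jn: "j = int n" using assms(3) n_def by simp
  have L: "Lmat D j = mprodn (Sseq D) 1 n" unfolding Lmat_def n_def using assms(3) by simp
  have L2: "Lmat D (-j) = mprodn (Sseq D) (- int n) n" unfolding Lmat_def n_def using assms(3) by simp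
  have "absM (Lmat D j) = mprodn (\<lambda>i. absM (Sseq D i)) 1 n"
    using pos_main[OF assms(1,2), of n] L by simp
  moreover have "absM (Lmat D (-j)) = mprodn (\<lambda>i. absM (Sseq D i)) (- int n) n"
    using neg_main[OF assms(1,2), of n] L2 by simp
  moreover have "nat j = n" using n_def by simp
  ultimately show ?thesis using jn by simp
qed


lemma part3:
  assumes "0 < D" "\<not> (\<exists>k::int. D = k^2)" "2 \<le> \<bar>j\<bar>"
  shows "1 \<le> real_of_int (max_entry (Lmat D j)) / real_of_int (min_entry (Lmat D j)) \<and>
        real_of_int (max_entry (Lmat D j)) / real_of_int (min_entry (Lmat D j)) \<le> 4 * (real_of_int D + sqrt (real_of_int D))"
proof (cases "0 < j")
  define M where "M = 2 * \<lfloor>sqrt (real_of_int D)\<rfloor>"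
  case True
  obtain n where n_def: "n = nat j" by simp
  have n2: "2 \<le> n" using assms(3) True n_def by simp
  have L: "Lmat D j = mprodn (Sseq D) 1 n" unfolding Lmat_def n_def using True by simp
  have ab: "absM (Lmat D j) = mprodn (\<lambda>i. absM (Sseq D i)) 1 n" using pos_main[OF assms(1,2), of n] L by simp
  obtain A B C E where P: "mprodn (\<lambda>i. absM (Sseq D i)) 1 n = mat2 A B C E" and I: "invR M A B C E"
    using posR[OF assms(1,2) n2] M_def by blast
  have h: "1 \<le> A" "A \<le> B" "A \<le> C" "B \<le> E" "C \<le> E" "E \<le> (M+1)*B" "B \<le> (M+1)*A"
    using I unfolding invR_def by auto
  have mm: "max_entry (Lmat D j) = E" "min_entry (Lmat D j) = A"
    using maxmin[of "Lmat D j" A B C E A E] ab P h by auto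
  have "A \<le> E" using h by linarith
  then show ?thesis using ratio_final[OF assms(1,2) M_def h(1) _ h(6) h(7)] mm by simp
next
  define M where "M = 2 * \<lfloor>sqrt (real_of_int D)\<rfloor>"
  case False
  obtain n where n_def: "n = nat (-j)" by simp
  have n2: "2 \<le> n" using assms(3) False n_def by simp
  have jn: "j = - int n" using False n_def by simp
  have L: "Lmat D j = mprodn (Sseq D) (- int n) n" unfolding Lmat_def using False jn by simp
  have ab: "absM (Lmat D j) = mprodn (\<lambda>i. absM (Sseq D i)) (- int n) n" using neg_main[OF assms(1,2), of n] L by simp
  obtain A B C E where P: "mprodn (\<lambda>i. absM (Sseq D i)) (- int n) n = mat2 A B C E" and I: "invL M A B C E"
    using negL[OF assms(1,2) n2] M_def by blast
  have h: "1 \<le> E" "E \<le> B" "E \<le> C" "B \<le> A" "C \<le> A" "A \<le> (M+1)*B" "B \<le> (M+1)*E"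
    using I unfolding invL_def by auto
  have mm: "max_entry (Lmat D j) = A" "min_entry (Lmat D j) = E"
    using maxmin[of "Lmat D j" A B C E E A] ab P h by auto
  have "E \<le> A" using h by linarith
  then show ?thesis using ratio_final[OF assms(1,2) M_def h(1) _ h(6) h(7)] mm by simp
qed

theorem lemma5p2:
  fixes D :: int
  assumes "0 < D" and "\<not> (\<exists>k::int. D = k^2)"
  shows "(\<forall>j::int. 0 < j \<longrightarrow>
            (let L = Lmat D j in
              (j mod 4 = 0 \<longrightarrow> L$1$1 \<ge> 0 \<and> L$1$2 \<ge> 0 \<and> L$2$1 \<ge> 0 \<and> L$2$2 \<ge> 0) \<and>
              (j mod 4 = 1 \<longrightarrow> L$1$1 \<le> 0 \<and> L$1$2 \<ge> 0 \<and> L$2$1 \<le> 0 \<and> L$2$2 \<ge> 0) \<and>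
              (j mod 4 = 2 \<longrightarrow> L$1$1 \<le> 0 \<and> L$1$2 \<le> 0 \<and> L$2$1 \<le> 0 \<and> L$2$2 \<le> 0) \<and>
              (j mod 4 = 3 \<longrightarrow> L$1$1 \<ge> 0 \<and> L$1$2 \<le> 0 \<and> L$2$1 \<ge> 0 \<and> L$2$2 \<le> 0)))
       \<and> (\<forall>j::int. 0 < j \<longrightarrow>
            absM (Lmat D j) = mprodn (\<lambda>i. absM (Sseq D i)) 1 (nat j) \<and>
            absM (Lmat D (- j)) = mprodn (\<lambda>i. absM (Sseq D i)) (- j) (nat j))
       \<and> (\<forall>j::int. 2 \<le> \<bar>j\<bar> \<longrightarrow>
            1 \<le> real_of_int (max_entry (Lmat D j)) / real_of_int (min_entry (Lmat D j)) \<and>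
            real_of_int (max_entry (Lmat D j)) / real_of_int (min_entry (Lmat D j))
              \<le> 4 * (real_of_int D + sqrt (real_of_int D)))"
  using part1[OF assms] part2[OF assms] part3[OF assms] by blast

end
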